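(* Let $n\ge2$, $d\ge2$ and $\mathbf{m}=(d-1,1,0,\ldots,0)\in\mathbb{N}^n$ (any $\mathbf{m}$ with $|\mathbf{m}|=d$ and $\max(\mathbf{m})=d-1$ is of this form up to permuting coordinates). Then \[\mathcal{A}_{n,d}\setminus\mathcal{A}_{n,d,\mathbf{m}}=\begin{cases}\{(2s+1,2t+1,0,\ldots,0): s,t\in\mathbb{N}\} & \text{if } d=2,\\ \{(ds-1,1,0,\ldots,0): s\ge1\} & \text{if } d>2.\end{cases}\]
   Context: For $\mathbf{a}\in\mathbb{N}^n$, $|\mathbf{a}|=\sum_i a_i$ and $\max(\mathbf{a})=\max_i a_i$. $T_{n,d}=\{\mathbf{a}\in\mathbb{N}^n:|\mathbf{a}|=d\}$; $\mathcal{A}_{n,d}$ is the (additive) semigroup generated by $T_{n,d}$; for $\mathbf{m}\in T_{n,d}$, $\mathcal{A}_{n,d,\mathbf{m}}$ is the semigroup generated by $T_{n,d}\setminus\{\mathbf{m}\}$. *)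

theory Defs
  imports Main
begin

text \<open>Vectors in N^n are represented as functions nat => nat vanishing at indices >= n
  (coordinate i of the paper corresponds to index i-1).\<close>

definition natvecs :: "nat \<Rightarrow> (nat \<Rightarrow> nat) set" where
  "natvecs n = {a. \<forall>i\<ge>n. a i = 0}"

definition vabs :: "nat \<Rightarrow> (nat \<Rightarrow> nat) \<Rightarrow> nat" where
  "vabs n a = (\<Sum>i<n. a i)"

definition vmax :: "nat \<Rightarrow> (nat \<Rightarrow> nat) \<Rightarrow> nat" where
  "vmax n a = Max (a ` {..<n})"

definition T :: "nat \<Rightarrow> nat \<Rightarrow> (nat \<Rightarrow> nat) set" where
  "T n d = {a \<in> natvecs n. vabs n a = d}"

inductive_set sgen :: "(nat \<Rightarrow> nat) set \<Rightarrow> (nat \<Rightarrow> nat) set" for S where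
  base: "a \<in> S \<Longrightarrow> a \<in> sgen S"
| add: "a \<in> sgen S \<Longrightarrow> b \<in> sgen S \<Longrightarrow> (\<lambda>i. a i + b i) \<in> sgen S"

definition A :: "nat \<Rightarrow> nat \<Rightarrow> (nat \<Rightarrow> nat) set" where
  "A n d = sgen (T n d)"

definition Am :: "nat \<Rightarrow> nat \<Rightarrow> (nat \<Rightarrow> nat) \<Rightarrow> (nat \<Rightarrow> nat) set" where
  "Am n d m = sgen (T n d - {m})"

definition vec2 :: "nat \<Rightarrow> nat \<Rightarrow> nat \<Rightarrow> nat" where
  "vec2 x y = (\<lambda>i. if i = 0 then x else if i = 1 then y else 0)"

end

theory Submission
  imports Defs "HOL-Library.Function_Algebras"
begin

lemma sgen_add': "a \<in> sgen S \<Longrightarrow> b \<in> sgen S \<Longrightarrow> a + b \<in> sgen S"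
  using sgen.add[of a S b] by (simp add: plus_fun_def)

lemma sgen_mono': "x \<in> sgen S \<Longrightarrow> S \<subseteq> S' \<Longrightarrow> x \<in> sgen S'"
  by (induction x rule: sgen.induct) (auto intro: sgen.intros)

lemma vec2_add: "vec2 x y + vec2 x' y' = vec2 (x+x') (y+y')"
  by (auto simp: vec2_def fun_eq_iff)

lemma vec2_eq: "vec2 x y = vec2 x' y' \<longleftrightarrow> x = x' \<and> y = y'"
  by (auto simp: vec2_def fun_eq_iff dest: spec[of _ 0] spec[of _ 1])

lemma vabs_add: "vabs n (a + b) = vabs n a + vabs n b"
  by (simp add: vabs_def sum.distrib)

lemma vabs_split: "n \<ge> 2 \<Longrightarrow> vabs n x = x 0 + x 1 + (\<Sum>i\<in>{2..<n}. x i)"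
proof -
  assume "n \<ge> 2"
  hence "{..<n} = insert 0 (insert 1 {2..<n})" by auto
  thus ?thesis by (simp add: vabs_def)
qed

lemma vabs_zero2: "n \<ge> 2 \<Longrightarrow> \<forall>j\<ge>2. x j = 0 \<Longrightarrow> vabs n x = x 0 + x 1"
  by (simp add: vabs_split)

lemma vec2_T: "n \<ge> 2 \<Longrightarrow> vec2 x y \<in> T n d \<longleftrightarrow> x + y = d"
  by (auto simp: T_def natvecs_def vabs_zero2 vec2_def)

definition mv :: "(nat \<Rightarrow> nat) \<Rightarrow> nat \<Rightarrow> nat \<Rightarrow> nat \<Rightarrow> nat" where
  "mv p j k = (\<lambda>i. if i = j then p i - 1 else if i = k then p i + 1 else p i)"

definition ee :: "nat \<Rightarrow> nat \<Rightarrow> nat" where "ee j = (\<lambda>i. if i = j then 1 else 0)"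

lemma vabs_ee: "j < n \<Longrightarrow> vabs n (ee j) = 1"
  by (simp add: vabs_def ee_def)

lemma mv_T:
  assumes "p \<in> T n d" "j < n" "k < n" "j \<noteq> k" "p j \<ge> 1"
  shows "mv p j k \<in> T n d"
proof -
  have "mv p j k + ee j = p + ee k"
    using assms by (auto simp: mv_def ee_def fun_eq_iff)
  hence "vabs n (mv p j k) + 1 = vabs n p + 1"
    using assms vabs_add[of n "mv p j k" "ee j"] vabs_add[of n p "ee k"] vabs_ee by metis
  moreover have "mv p j k \<in> natvecs n" using assms by (auto simp: T_def natvecs_def mv_def)
  ultimately show ?thesis using assms by (auto simp: T_def)
qed

lemma mv_split:
  assumes "j \<noteq> k" "p j \<ge> 1" "m k \<ge> 1"
  shows "m + p = mv m k j + mv p j k"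
  using assms by (auto simp: mv_def fun_eq_iff)

definition Ex :: "nat \<Rightarrow> (nat \<Rightarrow> nat) set" where
  "Ex d = (if d = 2 then {vec2 (2 * s + 1) (2 * t + 1) | s t. True}
     else {vec2 (d * s - 1) 1 | s. s \<ge> 1})"

lemma Ex2: "Ex 2 = {vec2 (2 * s + 1) (2 * t + 1) | s t. True}" by (simp add: Ex_def)
lemma Exd: "d \<noteq> 2 \<Longrightarrow> Ex d = {vec2 (d * s - 1) 1 | s. s \<ge> 1}" by (simp add: Ex_def)

definition Qg :: "nat \<Rightarrow> nat \<Rightarrow> (nat \<Rightarrow> nat) \<Rightarrow> bool" where
  "Qg n d x \<longleftrightarrow> x \<in> natvecs n \<and> d dvd vabs n x \<and> ((\<forall>j\<ge>2. x j = 0) \<longrightarrow>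
     (if d = 2 then \<not> (odd (x 0) \<and> odd (x 1)) else \<not> (x 1 = 1 \<and> x 0 mod d = d - 1)))"

context
  fixes n d :: nat and m :: "nat \<Rightarrow> nat"
  assumes n2: "n \<ge> 2" and d2: "d \<ge> 2" and mdef: "m = vec2 (d - 1) 1"
begin

abbreviation E :: "(nat \<Rightarrow> nat) set" where
  "E \<equiv> Ex d"

lemma m_T: "m \<in> T n d"
  using n2 d2 by (simp add: mdef vec2_T)

lemma vec2_Am: "x + y = d \<Longrightarrow> vec2 x y \<noteq> m \<Longrightarrow> vec2 x y \<in> Am n d m"
  using n2 by (auto simp: Am_def vec2_T intro: sgen.base)

lemma dk0: "k \<ge> 1 \<Longrightarrow> vec2 (d * k) 0 \<in> Am n d m"
proof (induction k rule: dec_induct)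
  case base
  show ?case using vec2_Am[of d 0] by (simp add: mdef vec2_eq)
next
  case (step k)
  have "vec2 d 0 \<in> Am n d m" using vec2_Am[of d 0] by (simp add: mdef vec2_eq)
  from sgen_add'[OF step(3)[unfolded Am_def] this[unfolded Am_def]]
  show ?case by (simp add: vec2_add Am_def algebra_simps)
qed

lemma d0k: "k \<ge> 1 \<Longrightarrow> vec2 0 (d * k) \<in> Am n d m"
proof (induction k rule: dec_induct)
  case base
  show ?case using vec2_Am[of 0 d] d2 by (simp add: mdef vec2_eq)
next
  case (step k)
  have "vec2 0 d \<in> Am n d m" using vec2_Am[of 0 d] d2 by (simp add: mdef vec2_eq)
  from sgen_add'[OF step(3)[unfolded Am_def] this[unfolded Am_def]]
  show ?case by (simp add: vec2_add Am_def algebra_simps)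
qed

lemma Am_add: "a \<in> Am n d m \<Longrightarrow> b \<in> Am n d m \<Longrightarrow> a + b \<in> Am n d m"
  by (simp add: Am_def sgen_add')

lemma dab: "a + b \<ge> 1 \<Longrightarrow> vec2 (d*a) (d*b) \<in> Am n d m"
proof -
  assume h: "a + b \<ge> 1"
  show ?thesis
  proof (cases "a = 0")
    case True thus ?thesis using h d0k[of b] by simp
  next
    case False
    show ?thesis
    proof (cases "b = 0")
      case True thus ?thesis using False dk0[of a] by simp
    next
      case F: False
      have "vec2 (d*a) (d*b) = vec2 (d*a) 0 + vec2 0 (d*b)" by (simp add: vec2_add)
      thus ?thesis using Am_add dk0[of a] d0k[of b] False F by simp
    qed
  qed
qed

lemma E_decomp: "a \<in> E \<Longrightarrow> \<exists>r. a = m + r \<and> (r = 0 \<or> r \<in> Am n d m)"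
proof -
  assume a: "a \<in> E"
  show ?thesis
  proof (cases "d = 2")
    case True
    then obtain s t where st: "a = vec2 (2*s+1) (2*t+1)" using a by (auto simp: Ex_def)
    have eq: "a = m + vec2 (2*s) (2*t)" using True by (simp add: st mdef vec2_add)
    show ?thesis
    proof (cases "s + t \<ge> 1")
      case True
      thus ?thesis using eq dab[of s t] \<open>d = 2\<close> by auto
    next
      case False
      hence "vec2 (2*s) (2*t) = 0" by (auto simp: vec2_def fun_eq_iff)
      thus ?thesis using eq by auto
    qed
  next
    case False
    then obtain s where s: "s \<ge> 1" "a = vec2 (d*s - 1) 1" using a by (auto simp: Ex_def)
    then obtain s' where s': "s = Suc s'" by (cases s) auto
    have "d * s - 1 = d - 1 + d * s'" using s' d2 by simp
    hence eq: "a = m + vec2 (d*s') 0" by (simp add: s mdef vec2_add)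
    show ?thesis
    proof (cases "s' \<ge> 1")
      case True thus ?thesis using eq dk0 by auto
    next
      case False
      hence "vec2 (d*s') 0 = 0" by (auto simp: vec2_def fun_eq_iff)
      thus ?thesis using eq by auto
    qed
  qed
qed

lemma Am_A: "x \<in> Am n d m \<Longrightarrow> x \<in> A n d"
  unfolding Am_def A_def by (erule sgen_mono') auto

lemma E_A: "a \<in> E \<Longrightarrow> a \<in> A n d"
proof -
  assume "a \<in> E"
  then obtain r where r: "a = m + r" "r = 0 \<or> r \<in> Am n d m" using E_decomp by blast
  have mA: "m \<in> A n d" using m_T by (simp add: A_def sgen.base)
  show ?thesis
  proof (cases "r = 0")
    case True thus ?thesis using r mA by simp
  next
    case False thus ?thesis using r mA Am_A[of r] sgen_add' by (auto simp: A_def)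
  qed
qed

lemma mp_Am:
  assumes p: "p \<in> T n d" "p \<noteq> m" "p \<noteq> vec2 d 0" "\<not> (d = 2 \<and> p = vec2 0 2)"
  shows "m + p \<in> Am n d m"
proof -
  have m0: "m 0 = d - 1" and m1: "m 1 = 1" and mj: "\<And>j. j \<ge> 2 \<Longrightarrow> m j = 0"
    by (auto simp: mdef vec2_def)
  have mT: "m \<in> T n d" by (rule m_T)
  have n0: "0 < n" "1 < n" using n2 by auto
  show ?thesis
  proof (cases "p 0 \<ge> 1")
    case True
    have u: "mv m 1 0 = vec2 d 0" using d2 by (auto simp: mv_def mdef vec2_def fun_eq_iff)
    have uA: "mv m 1 0 \<in> Am n d m" unfolding u using vec2_Am[of d 0] by (simp add: mdef vec2_eq)
    have vT: "mv p 0 1 \<in> T n d" using mv_T[OF p(1) n0 _ True] by simp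
    have "mv p 0 1 \<noteq> m"
    proof
      assume h: "mv p 0 1 = m"
      have "p = vec2 d 0"
      proof
        fix i
        have "mv p 0 1 i = m i" using h by simp
        thus "p i = vec2 d 0 i" using True d2
          by (cases "i = 0"; cases "i = 1") (auto simp: mv_def mdef vec2_def)
      qed
      thus False using p by simp
    qed
    hence vA: "mv p 0 1 \<in> Am n d m" using vT by (auto simp: Am_def intro: sgen.base)
    have "m + p = mv m 1 0 + mv p 0 1" using mv_split[of 0 1 p m] True m1 by simp
    thus ?thesis using Am_add uA vA by simp
  next
    case False
    hence p0: "p 0 = 0" by simp
    show ?thesis
    proof (cases "p 1 \<ge> 1")
      case True
      have u: "mv m 0 1 = vec2 (d-2) 2" using d2 by (auto simp: mv_def mdef vec2_def fun_eq_iff)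
      have uA: "mv m 0 1 \<in> Am n d m" unfolding u using vec2_Am[of "d-2" 2] d2 by (simp add: mdef vec2_eq)
      have vT: "mv p 1 0 \<in> T n d" using mv_T[OF p(1) n0(2) n0(1) _ True] by simp
      have "mv p 1 0 \<noteq> m"
      proof
        assume h: "mv p 1 0 = m"
        have dd: "d = 2" using fun_cong[OF h, of 0] p0 d2 by (simp add: mv_def mdef vec2_def)
        have "p = vec2 0 2"
        proof
          fix i
          have "mv p 1 0 i = m i" using h by simp
          thus "p i = vec2 0 2 i" using True dd p0
            by (cases "i = 0"; cases "i = 1") (auto simp: mv_def mdef vec2_def)
        qed
        thus False using p dd by simp
      qed
      hence vA: "mv p 1 0 \<in> Am n d m" using vT by (auto simp: Am_def intro: sgen.base)
      have "m + p = mv m 0 1 + mv p 1 0" using mv_split[of 1 0 p m] True m0 d2 by simp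
      thus ?thesis using Am_add uA vA by simp
    next
      case False
      hence p1: "p 1 = 0" by simp
      have "\<exists>j. 2 \<le> j \<and> p j \<ge> 1"
      proof (rule ccontr)
        assume "\<not> ?thesis"
        hence "\<forall>j\<ge>2. p j = 0" by auto
        hence "vabs n p = 0" using vabs_zero2[OF n2] p0 p1 by simp
        thus False using p(1) d2 by (simp add: T_def)
      qed
      then obtain j where j: "2 \<le> j" "p j \<ge> 1" by blast
      have jn: "j < n"
      proof (rule ccontr)
        assume "\<not> j < n"
        hence "p j = 0" using p(1) by (auto simp: T_def natvecs_def)
        thus False using j by simp
      qed
      have uT: "mv m 1 j \<in> T n d" using mv_T[OF mT n0(2) jn] j m1 by simp
      have "mv m 1 j 1 = 0" using j m1 by (simp add: mv_def)
      hence "mv m 1 j \<noteq> m" using m1 by auto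
      hence uA: "mv m 1 j \<in> Am n d m" using uT by (auto simp: Am_def intro: sgen.base)
      have vT: "mv p j 1 \<in> T n d" using mv_T[OF p(1) jn n0(2)] j by simp
      have "mv p j 1 0 = 0" using j p0 by (simp add: mv_def)
      hence "mv p j 1 \<noteq> m" using m0 d2 by auto
      hence vA: "mv p j 1 \<in> Am n d m" using vT by (auto simp: Am_def intro: sgen.base)
      have "m + p = mv m 1 j + mv p j 1" using mv_split[of j 1 p m] j m1 by simp
      thus ?thesis using Am_add uA vA by simp
    qed
  qed
qed

lemma E_plus_exc:
  assumes "a \<in> E" "p = vec2 d 0 \<or> (d = 2 \<and> p = vec2 0 2)"
  shows "a + p \<in> E"
proof (cases "d = 2")
  case True
  then obtain s t where st: "a = vec2 (2*s+1) (2*t+1)" using assms by (auto simp: Ex_def)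
  show ?thesis
  proof (cases "p = vec2 d 0")
    case True
    hence "a + p = vec2 (2*(s+1)+1) (2*t+1)" using \<open>d = 2\<close> by (simp add: st vec2_add)
    thus ?thesis using \<open>d = 2\<close> Ex2 by blast
  next
    case False
    hence "a + p = vec2 (2*s+1) (2*(t+1)+1)" using assms \<open>d = 2\<close> by (simp add: st vec2_add)
    thus ?thesis using \<open>d = 2\<close> Ex2 by blast
  qed
next
  case False
  then obtain s where s: "s \<ge> 1" "a = vec2 (d*s - 1) 1" using assms by (auto simp: Ex_def)
  have p: "p = vec2 d 0" using assms False by auto
  have "d * s - 1 + d = d * (s+1) - 1" using s d2 by (simp add: algebra_simps)
  hence "a + p = vec2 (d*(s+1) - 1) 1" by (simp add: s p vec2_add)
  moreover have "s + 1 \<ge> 1" by simp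
  ultimately show ?thesis using Exd[OF False] by blast
qed

lemma L: "b \<in> Am n d m \<Longrightarrow> \<forall>a. a \<in> E \<longrightarrow> a + b \<in> Am n d m \<union> E"
  unfolding Am_def
proof (induction b rule: sgen.induct)
  case (base p)
  show ?case
  proof (intro allI impI)
    fix a assume a: "a \<in> E"
    show "a + p \<in> sgen (T n d - {m}) \<union> E"
    proof (cases "p = vec2 d 0 \<or> (d = 2 \<and> p = vec2 0 2)")
      case True thus ?thesis using E_plus_exc a by auto
    next
      case False
      hence mp: "m + p \<in> Am n d m" using mp_Am base by auto
      obtain r where r: "a = m + r" "r = 0 \<or> r \<in> Am n d m" using E_decomp a by blast
      show ?thesis
      proof (cases "r = 0")
        case True thus ?thesis using r mp by (simp add: Am_def)
      next
        case False
        hence "r + (m + p) \<in> Am n d m" using r Am_add mp by auto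
        moreover have "a + p = r + (m + p)" using r by (simp add: algebra_simps)
        ultimately show ?thesis by (simp add: Am_def)
      qed
    qed
  qed
next
  case (add b1 b2)
  show ?case
  proof (intro allI impI)
    fix a assume a: "a \<in> E"
    have eq: "a + (\<lambda>i. b1 i + b2 i) = (a + b1) + b2" by (simp add: fun_eq_iff)
    from add.IH(1) a have "a + b1 \<in> sgen (T n d - {m}) \<union> E" unfolding plus_fun_def by blast
    thus "a + (\<lambda>i. b1 i + b2 i) \<in> sgen (T n d - {m}) \<union> E"
    proof
      assume h: "a + b1 \<in> sgen (T n d - {m})"
      have "a + b1 + b2 \<in> sgen (T n d - {m})" using sgen_add'[OF h add.hyps(2)] .
      thus ?thesis using eq by simp
    next
      assume "a + b1 \<in> E"
      hence "a + b1 + b2 \<in> sgen (T n d - {m}) \<union> E" using add.IH(2) unfolding plus_fun_def by blast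
      thus ?thesis using eq by simp
    qed
  qed
qed

lemma EE: "a \<in> E \<Longrightarrow> b \<in> E \<Longrightarrow> a + b \<in> Am n d m"
proof (cases "d = 2")
  case True
  assume "a \<in> E" "b \<in> E"
  then obtain s t s' t' where st: "a = vec2 (2*s+1) (2*t+1)" "b = vec2 (2*s'+1) (2*t'+1)"
    using True by (auto simp: Ex_def)
  have "a + b = vec2 (d*(s+s'+1)) (d*(t+t'+1))" using True by (simp add: st vec2_add)
  thus ?thesis using dab[of "s+s'+1" "t+t'+1"] by simp
next
  case False
  assume "a \<in> E" "b \<in> E"
  then obtain s t where st: "s \<ge> 1" "t \<ge> 1" "a = vec2 (d*s - 1) 1" "b = vec2 (d*t - 1) 1"
    using False by (auto simp: Ex_def)
  obtain s' t' where s': "s = Suc s'" "t = Suc t'" using st by (cases s; cases t) auto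
  have "d * s - 1 + (d * t - 1) = (d - 2) + d * (s' + t' + 1)" using d2 s'
    by (simp add: algebra_simps)
  hence eq: "a + b = vec2 (d-2) 2 + vec2 (d * (s'+t'+1)) 0" by (simp add: st vec2_add numeral_2_eq_2)
  have "vec2 (d-2) 2 \<in> Am n d m" using vec2_Am[of "d-2" 2] d2 by (simp add: mdef vec2_eq)
  thus ?thesis using eq Am_add dk0[of "s'+t'+1"] by simp
qed

lemma A_sub: "x \<in> A n d \<Longrightarrow> x \<in> Am n d m \<union> E"
  unfolding A_def
proof (induction x rule: sgen.induct)
  case (base p)
  show ?case
  proof (cases "p = m")
    case True
    have "m \<in> E"
    proof (cases "d = 2")
      case True thus ?thesis by (auto simp: Ex_def mdef intro!: exI[of _ 0])
    next
      case False thus ?thesis by (auto simp: Ex_def mdef intro!: exI[of _ 1])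
    qed
    thus ?thesis using True by simp
  next
    case False thus ?thesis using base by (auto simp: Am_def intro: sgen.base)
  qed
next
  case (add a b)
  have eq: "(\<lambda>i. a i + b i) = a + b" by (simp add: fun_eq_iff)
  have comm: "a + b = b + a" by (simp add: add.commute)
  have ab: "a \<in> Am n d m \<union> E" "b \<in> Am n d m \<union> E" using add.IH by auto
  have "a + b \<in> Am n d m \<union> E"
  proof (cases "a \<in> Am n d m")
    case T1: True
    show ?thesis
    proof (cases "b \<in> Am n d m")
      case True thus ?thesis using T1 Am_add by auto
    next
      case False
      hence "b \<in> E" using ab by auto
      hence "b + a \<in> Am n d m \<union> E" using L[OF T1] by blast
      thus ?thesis using comm by simp
    qed
  next
    case False
    hence aE: "a \<in> E" using ab by auto
    show ?thesis
    proof (cases "b \<in> Am n d m")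
      case True thus ?thesis using aE L[OF True] by blast
    next
      case False
      hence "b \<in> E" using ab by auto
      thus ?thesis using aE EE by auto
    qed
  qed
  thus ?case unfolding eq .
qed

abbreviation Q :: "(nat \<Rightarrow> nat) \<Rightarrow> bool" where "Q \<equiv> Qg n d"

lemma Q_add: assumes "Q a" "Q b" shows "Q (a + b)"
proof -
  have nv: "a + b \<in> natvecs n" using assms by (auto simp: Qg_def natvecs_def)
  have dv: "d dvd vabs n (a + b)" using assms by (simp add: Qg_def vabs_add)
  have third: "(if d = 2 then \<not> (odd ((a+b) 0) \<and> odd ((a+b) 1))
        else \<not> ((a+b) 1 = 1 \<and> (a+b) 0 mod d = d - 1))" if z: "\<forall>j\<ge>2. (a+b) j = 0"
  proof -
    have za: "\<forall>j\<ge>2. a j = 0" and zb: "\<forall>j\<ge>2. b j = 0" using z by auto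
    have va: "vabs n a = a 0 + a 1" and vb: "vabs n b = b 0 + b 1"
      using vabs_zero2[OF n2] za zb by auto
    have da: "d dvd a 0 + a 1" and db: "d dvd b 0 + b 1" using assms va vb by (auto simp: Qg_def)
    show ?thesis
    proof (cases "d = 2")
      case True
      have "\<not> (odd (a 0) \<and> odd (a 1))" "\<not> (odd (b 0) \<and> odd (b 1))"
        using assms za zb True by (auto simp: Qg_def)
      moreover have "even (a 0 + a 1)" "even (b 0 + b 1)" using da db True by auto
      ultimately show ?thesis using True by auto
    next
      case False
      have qa: "\<not> (a 1 = 1 \<and> a 0 mod d = d - 1)" and qb: "\<not> (b 1 = 1 \<and> b 0 mod d = d - 1)"
        using assms za zb False by (auto simp: Qg_def)
      have "\<not> (a 1 + b 1 = 1 \<and> (a 0 + b 0) mod d = d - 1)"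
      proof
        assume h: "a 1 + b 1 = 1 \<and> (a 0 + b 0) mod d = d - 1"
        hence "(a 1 = 0 \<and> b 1 = 1) \<or> (a 1 = 1 \<and> b 1 = 0)" by auto
        thus False
        proof
          assume c: "a 1 = 0 \<and> b 1 = 1"
          hence "d dvd a 0" using da by simp
          hence "(a 0 + b 0) mod d = b 0 mod d" by (simp add: mod_add_left_eq[symmetric])
          thus False using h qb c by simp
        next
          assume c: "a 1 = 1 \<and> b 1 = 0"
          hence "d dvd b 0" using db by simp
          hence "(a 0 + b 0) mod d = a 0 mod d" by (simp add: mod_add_right_eq[symmetric])
          thus False using h qa c by simp
        qed
      qed
      thus ?thesis using False by simp
    qed
  qed
  show ?thesis unfolding Qg_def using nv dv third by blast
qed

lemma Am_Q: "x \<in> Am n d m \<Longrightarrow> Q x"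
  unfolding Am_def
proof (induction x rule: sgen.induct)
  case (base p)
  hence pT: "p \<in> T n d" "p \<noteq> m" by auto
  have nv: "p \<in> natvecs n" and vp: "vabs n p = d" using pT by (auto simp: T_def)
  have H: "(\<forall>j\<ge>2. p j = 0) \<longrightarrow> (if d = 2 then \<not> (odd (p 0) \<and> odd (p 1)) else \<not> (p 1 = 1 \<and> p 0 mod d = d - 1))"
  proof
    assume z: "\<forall>j\<ge>2. p j = 0"
    have s: "p 0 + p 1 = d" using vabs_zero2[OF n2] z vp by simp
    have "p = vec2 (p 0) (p 1)" using z by (auto simp: vec2_def fun_eq_iff)
    show "if d = 2 then \<not> (odd (p 0) \<and> odd (p 1)) else \<not> (p 1 = 1 \<and> p 0 mod d = d - 1)"
    proof (cases "d = 2")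
      case True
      have "\<not> (odd (p 0) \<and> odd (p 1))"
      proof
        assume "odd (p 0) \<and> odd (p 1)"
        hence "p 0 = 1 \<and> p 1 = 1" using s True by presburger
        thus False using \<open>p = vec2 (p 0) (p 1)\<close> pT True by (simp add: mdef)
      qed
      thus ?thesis using True by simp
    next
      case False
      have "\<not> (p 1 = 1 \<and> p 0 mod d = d - 1)"
      proof
        assume h: "p 1 = 1 \<and> p 0 mod d = d - 1"
        hence "p 0 = d - 1" using s by simp
        thus False using \<open>p = vec2 (p 0) (p 1)\<close> pT h by (simp add: mdef)
      qed
      thus ?thesis using False by simp
    qed
  qed
  have "d dvd vabs n p" using vp by simp
  thus ?case unfolding Qg_def using nv H by blast
next
  case (add a b)
  have eq: "(\<lambda>i. a i + b i) = a + b" by (simp add: fun_eq_iff)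
  show ?case unfolding eq using Q_add add.IH by simp
qed

lemma E_notQ: "x \<in> E \<Longrightarrow> \<not> Q x"
proof (cases "d = 2")
  case True
  assume "x \<in> E"
  then obtain s t where "x = vec2 (2*s+1) (2*t+1)" using True by (auto simp: Ex_def)
  thus ?thesis using True by (simp add: Qg_def vec2_def)
next
  case False
  assume "x \<in> E"
  then obtain s where s: "s \<ge> 1" "x = vec2 (d*s - 1) 1" using False by (auto simp: Ex_def)
  obtain s' where s': "s = Suc s'" using s by (cases s) auto
  have e: "d * s - 1 = (d - 1) + s' * d" using s' d2 by (simp add: mult.commute)
  have "((d - 1) + s' * d) mod d = (d - 1) mod d" by (rule mod_mult_self1)
  hence "(d * s - 1) mod d = d - 1" using d2 e by simp
  thus ?thesis using False s by (simp add: Qg_def vec2_def)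
qed

lemma main: "A n d - Am n d m = E"
  using A_sub E_A Am_Q E_notQ by blast

end

theorem lemma2p18:
  fixes n d :: nat and m :: "nat \<Rightarrow> nat"
  assumes "n \<ge> 2" and "d \<ge> 2" and "m = vec2 (d - 1) 1"
  shows "A n d - Am n d m =
    (if d = 2 then {vec2 (2 * s + 1) (2 * t + 1) | s t. True}
     else {vec2 (d * s - 1) 1 | s. s \<ge> 1})"
  using main[OF assms] by (simp add: Ex_def)

end
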